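(* There exist a compact Hausdorff abelian group $G$ and Čech-analytic sets $A,B\subset G$ such that $A+B$ is not Čech-analytic.
   Context: Let $X$ be a compact Hausdorff space. A set $A\subset X$ is Čech-analytic if $A$ is the projection onto $X$ of a subset of $X\times\mathbb{N}^{\mathbb{N}}$ that is the intersection of a closed set with a $G_\delta$ set (here $\mathbb{N}^{\mathbb{N}}$ carries the product topology). *)

theory Defs
  imports "HOL-Analysis.Analysis" "HOL-Algebra.Coset"
begin

definition baire_space :: "(nat \<Rightarrow> nat) topology" where
  "baire_space = product_topology (\<lambda>_::nat. discrete_topology (UNIV::nat set)) UNIV"

definition cech_analytic :: "'a topology \<Rightarrow> 'a set \<Rightarrow> bool" where
  "cech_analytic X A \<longleftrightarrow>
     (\<exists>F H. closedin (prod_topology X baire_space) F \<and>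
            gdelta_in (prod_topology X baire_space) H \<and>
            A = fst ` (F \<inter> H))"

definition topological_group :: "('a, 'b) monoid_scheme \<Rightarrow> 'a topology \<Rightarrow> bool" where
  "topological_group G T \<longleftrightarrow> group G \<and> topspace T = carrier G \<and>
     continuous_map (prod_topology T T) T (\<lambda>(x, y). x \<otimes>\<^bsub>G\<^esub> y) \<and>
     continuous_map T T (\<lambda>x. inv\<^bsub>G\<^esub> x)"

end

theory Submission
  imports Defs
begin

definition indf :: "real set set \<Rightarrow> real set \<Rightarrow> bool" where
  "indf X = (\<lambda>i. i \<in> X)"

definition PT :: "(real set \<Rightarrow> bool) topology" where
  "PT = product_topology (\<lambda>_. discrete_topology (UNIV::bool set)) UNIV"

definition TT :: "real set set topology" where
  "TT = pullback_topology UNIV indf PT"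

lemma topspace_PT [simp]: "topspace PT = UNIV"
  by (simp add: PT_def)

lemma topspace_TT [simp]: "topspace TT = UNIV"
  by (simp add: TT_def topspace_pullback_topology)

lemma homeo_TT: "TT homeomorphic_space PT"
proof -
  have c1: "continuous_map TT PT indf"
    using continuous_map_pullback[of PT PT id UNIV indf] by (simp add: TT_def)
  have c2: "continuous_map PT TT Collect"
    unfolding TT_def
    by (rule continuous_map_pullback') (auto simp: indf_def o_def)
  show ?thesis unfolding homeomorphic_space_def homeomorphic_maps_def
    using c1 c2 by (intro exI[of _ indf] exI[of _ Collect]) (auto simp: indf_def)
qed

lemma compact_TT: "compact_space TT"
  using homeomorphic_compact_space[OF homeo_TT]
  by (simp add: PT_def compact_space_product_topology compact_space_discrete_topology)

lemma Hausdorff_TT: "Hausdorff_space TT"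
  using homeomorphic_Hausdorff_space[OF homeo_TT]
  by (simp add: PT_def Hausdorff_space_product_topology)

lemma cont_mem: "continuous_map TT (discrete_topology UNIV) (\<lambda>X. i \<in> X)"
proof -
  have "continuous_map PT (discrete_topology UNIV) (\<lambda>f. f i)"
    unfolding PT_def by (rule continuous_map_product_projection) simp
  from continuous_map_pullback[OF this, of UNIV indf]
  show ?thesis by (simp add: TT_def o_def indf_def)
qed

lemma open_mem: "openin TT {X. i \<in> X}"
proof -
  have "openin TT {X \<in> topspace TT. (\<lambda>X. i \<in> X) X \<in> {True}}"
    by (rule openin_continuous_map_preimage[OF cont_mem]) simp
  then show ?thesis by simp
qed

lemma open_nmem: "openin TT {X. i \<notin> X}"
proof -
  have "openin TT {X \<in> topspace TT. (\<lambda>X. i \<in> X) X \<in> {False}}"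
    by (rule openin_continuous_map_preimage[OF cont_mem]) simp
  then show ?thesis by simp
qed


definition CT :: "(nat \<Rightarrow> bool) topology" where
  "CT = product_topology (\<lambda>_. discrete_topology (UNIV::bool set)) UNIV"

lemma topspace_CT [simp]: "topspace CT = UNIV"
  by (simp add: CT_def)

lemma topspace_baire [simp]: "topspace baire_space = UNIV"
  by (simp add: baire_space_def)

lemma cyl:
  assumes "openin (product_topology (\<lambda>_::nat. discrete_topology (UNIV::'b set)) UNIV) V" "f \<in> V"
  shows "\<exists>n. \<forall>g. (\<forall>i<n. g i = f i) \<longrightarrow> g \<in> V"
proof -
  obtain U where U: "finite {i. U i \<noteq> UNIV}" "f \<in> PiE UNIV U" "PiE UNIV U \<subseteq> V"
    using assms unfolding openin_product_topology_alt by auto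
  obtain n where n: "{i. U i \<noteq> UNIV} \<subseteq> {..<n}"
    using U(1) finite_nat_bounded by blast
  show ?thesis
  proof (intro exI allI impI)
    fix g :: "nat \<Rightarrow> 'b" assume g: "\<forall>i<n. g i = f i"
    have "g \<in> PiE UNIV U"
    proof -
      have "g i \<in> U i" for i
      proof (cases "i < n")
        case True then show ?thesis using g U(2) by (auto simp: PiE_def Pi_def)
      next
        case False then show ?thesis using n by auto
      qed
      then show ?thesis by (auto simp: PiE_def Pi_def)
    qed
    then show "g \<in> V" using U(3) by auto
  qed
qed

definition Bas :: "bool list \<times> nat list \<Rightarrow> ((nat \<Rightarrow> bool) \<times> (nat \<Rightarrow> nat)) set" where
  "Bas k = {(f,g). (\<forall>i<length (fst k). f i = fst k ! i) \<and> (\<forall>i<length (snd k). g i = snd k ! i)}"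

lemma open_Bas:
  assumes "openin (prod_topology CT baire_space) U" "p \<in> U"
  shows "\<exists>k. p \<in> Bas k \<and> Bas k \<subseteq> U"
proof -
  obtain f g where p: "p = (f,g)" by (cases p)
  have "(f,g) \<in> U" using assms(2) p by simp
  then obtain V W where VW: "openin CT V" "openin baire_space W" "f \<in> V" "g \<in> W" "V \<times> W \<subseteq> U"
    using assms(1) unfolding openin_prod_topology_alt by meson
  have oV: "openin (product_topology (\<lambda>_::nat. discrete_topology (UNIV::bool set)) UNIV) V"
    using VW(1) by (simp add: CT_def)
  obtain n1 where n1: "\<forall>h. (\<forall>i<n1. h i = f i) \<longrightarrow> h \<in> V"
    using cyl[OF oV VW(3)] by blast
  have oW: "openin (product_topology (\<lambda>_::nat. discrete_topology (UNIV::nat set)) UNIV) W"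
    using VW(2) by (simp add: baire_space_def)
  obtain n2 where n2: "\<forall>h. (\<forall>i<n2. h i = g i) \<longrightarrow> h \<in> W"
    using cyl[OF oW VW(4)] by blast
  show ?thesis
  proof (intro exI conjI)
    show "p \<in> Bas (map f [0..<n1], map g [0..<n2])"
      by (simp add: Bas_def p)
    show "Bas (map f [0..<n1], map g [0..<n2]) \<subseteq> U"
    proof
      fix q assume q: "q \<in> Bas (map f [0..<n1], map g [0..<n2])"
      obtain a b where ab: "q = (a,b)" by (cases q)
      have "\<forall>i<n1. a i = f i" using q by (simp add: Bas_def ab)
      then have "a \<in> V" using n1 by blast
      moreover have "\<forall>i<n2. b i = g i" using q by (simp add: Bas_def ab)
      then have "b \<in> W" using n2 by blast
      ultimately show "q \<in> U" using VW(5) ab by auto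
    qed
  qed
qed

definition Dset :: "(bool list \<times> nat list) set \<Rightarrow> (nat \<Rightarrow> (bool list \<times> nat list) set) \<Rightarrow> (nat \<Rightarrow> bool) set" where
  "Dset K1 K2 = fst ` {p. (\<forall>k\<in>K1. p \<notin> Bas k) \<and> (\<forall>n. \<exists>k\<in>K2 n. p \<in> Bas k)}"

lemma coding:
  assumes "closedin (prod_topology CT baire_space) F" "gdelta_in (prod_topology CT baire_space) H"
  shows "\<exists>K1 K2. fst ` (F \<inter> H) = Dset K1 K2"
proof -
  let ?Z = "prod_topology CT baire_space"
  have tZ: "topspace ?Z = UNIV" by simp
  have oF: "openin ?Z (- F)" using assms(1) unfolding closedin_def by (simp add: Compl_eq_Diff_UNIV)
  obtain C where C: "\<And>n::nat. openin ?Z (C n)" "\<Inter>(range C) = H"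
    using assms(2) unfolding gdelta_in_descending by blast
  define K1 where "K1 = {k. Bas k \<subseteq> - F}"
  define K2 where "K2 = (\<lambda>n. {k. Bas k \<subseteq> C n})"
  have "F \<inter> H = {p. (\<forall>k\<in>K1. p \<notin> Bas k) \<and> (\<forall>n. \<exists>k\<in>K2 n. p \<in> Bas k)}"
  proof (rule Set.set_eqI, rule iffI)
    fix p assume p: "p \<in> F \<inter> H"
    then have "\<forall>k\<in>K1. p \<notin> Bas k" by (auto simp: K1_def)
    moreover have "\<exists>k\<in>K2 n. p \<in> Bas k" for n
      using open_Bas[OF C(1)[of n], of p] p C(2) by (auto simp: K2_def)
    ultimately show "p \<in> {p. (\<forall>k\<in>K1. p \<notin> Bas k) \<and> (\<forall>n. \<exists>k\<in>K2 n. p \<in> Bas k)}" by blast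
  next
    fix p assume p: "p \<in> {p. (\<forall>k\<in>K1. p \<notin> Bas k) \<and> (\<forall>n. \<exists>k\<in>K2 n. p \<in> Bas k)}"
    have "p \<in> F"
    proof (rule ccontr)
      assume "p \<notin> F"
      then obtain k where "p \<in> Bas k" "Bas k \<subseteq> - F" using open_Bas[OF oF, of p] by auto
      then have "k \<in> K1" by (simp add: K1_def)
      then show False using p \<open>p \<in> Bas k\<close> by blast
    qed
    moreover have "p \<in> C n" for n
      using p by (auto simp: K2_def)
    ultimately show "p \<in> F \<inter> H" using C(2) by auto
  qed
  then show ?thesis unfolding Dset_def by blast
qed

definition code :: "(nat \<Rightarrow> bool) \<Rightarrow> (bool list \<times> nat list) set \<times> (nat \<Rightarrow> (bool list \<times> nat list) set)" where
  "code f = ({k. f (prod_encode (0, to_nat k))}, \<lambda>n. {k. f (prod_encode (Suc n, to_nat k))})"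

definition Sd :: "(nat \<Rightarrow> bool) set" where
  "Sd = {f. f \<notin> Dset (fst (code f)) (snd (code f))}"

lemma code_surj: "\<exists>f. code f = (K1, K2)"
proof -
  define f where "f = (\<lambda>x. case prod_decode x of (0, j) \<Rightarrow> from_nat j \<in> K1 | (Suc n, j) \<Rightarrow> from_nat j \<in> K2 n)"
  have a: "f (prod_encode (0, j)) = (from_nat j \<in> K1)" for j
    by (simp add: f_def)
  have b: "f (prod_encode (Suc n, j)) = (from_nat j \<in> K2 n)" for n j
    by (simp add: f_def)
  have "code f = (K1, K2)"
    unfolding code_def a b by simp
  then show ?thesis by blast
qed

lemma Sd_not_D: "Sd \<noteq> Dset K1 K2"
proof
  assume eq: "Sd = Dset K1 K2"
  obtain f where f: "code f = (K1, K2)" using code_surj by blast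
  have "f \<in> Sd \<longleftrightarrow> f \<notin> Dset K1 K2" using f unfolding Sd_def by simp
  then show False using eq by blast
qed


definition iota :: "nat \<Rightarrow> real set" where "iota n = {real n}"
definition phi :: "(nat \<Rightarrow> bool) \<Rightarrow> real set" where "phi f = insert (-1) (real ` {n. f n})"
definition emb :: "(nat \<Rightarrow> bool) \<Rightarrow> real set set" where "emb f = iota ` {n. f n}"

lemma phi_ne_iota [simp]: "phi f \<noteq> iota n" "iota n \<noteq> phi f"
  by (auto simp: phi_def iota_def)

lemma iota_inj [simp]: "iota n = iota m \<longleftrightarrow> n = m"
  by (auto simp: iota_def)

lemma phi_inj [simp]: "phi f = phi g \<longleftrightarrow> f = g"
proof
  assume h: "phi f = phi g"
  have "real ` {n. f n} = real ` {n. g n}"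
  proof -
    have "real ` {n. f n} = phi f - {-1}" by (auto simp: phi_def)
    also have "\<dots> = phi g - {-1}" using h by simp
    also have "\<dots> = real ` {n. g n}" by (auto simp: phi_def)
    finally show ?thesis .
  qed
  then have "{n. f n} = {n. g n}" by (simp add: inj_image_eq_iff inj_on_def)
  then show "f = g" by (auto simp: fun_eq_iff)
qed simp

lemma phi_notin_emb [simp]: "phi f \<notin> emb g"
  by (auto simp: emb_def)

lemma iota_in_emb [simp]: "iota n \<in> emb f \<longleftrightarrow> f n"
  by (auto simp: emb_def)

lemma emb_inj: "emb f = emb g \<Longrightarrow> f = g"
proof -
  assume "emb f = emb g"
  then have "f n = g n" for n by (metis iota_in_emb)
  then show "f = g" by auto
qed

definition Ggrp :: "real set set monoid" where
  "Ggrp = \<lparr>carrier = UNIV, mult = (\<lambda>X Y. (X - Y) \<union> (Y - X)), one = {}\<rparr>"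

lemma Ggrp_simps [simp]: "carrier Ggrp = UNIV" "X \<otimes>\<^bsub>Ggrp\<^esub> Y = (X - Y) \<union> (Y - X)" "\<one>\<^bsub>Ggrp\<^esub> = {}"
  by (simp_all add: Ggrp_def)

lemma comm_Ggrp: "comm_group Ggrp"
proof (rule comm_groupI)
  fix x y z :: "real set set"
  show "x \<otimes>\<^bsub>Ggrp\<^esub> y \<otimes>\<^bsub>Ggrp\<^esub> z = x \<otimes>\<^bsub>Ggrp\<^esub> (y \<otimes>\<^bsub>Ggrp\<^esub> z)" by auto
  show "x \<otimes>\<^bsub>Ggrp\<^esub> y = y \<otimes>\<^bsub>Ggrp\<^esub> x" by auto
  show "\<one>\<^bsub>Ggrp\<^esub> \<otimes>\<^bsub>Ggrp\<^esub> x = x" by auto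
  show "\<exists>y\<in>carrier Ggrp. y \<otimes>\<^bsub>Ggrp\<^esub> x = \<one>\<^bsub>Ggrp\<^esub>" by (rule bexI[of _ x]) auto
qed auto

lemma inv_Ggrp [simp]: "inv\<^bsub>Ggrp\<^esub> X = X"
proof -
  interpret group Ggrp using comm_Ggrp comm_group_def by blast
  show ?thesis by (rule inv_equality) auto
qed

lemma into_TT: "continuous_map X PT (indf \<circ> g) \<Longrightarrow> continuous_map X TT g"
  unfolding TT_def by (rule continuous_map_pullback') auto

lemma topgroup_Ggrp: "topological_group Ggrp TT"
  unfolding topological_group_def
proof (intro conjI)
  show "group Ggrp" using comm_Ggrp comm_group_def by blast
  show "topspace TT = carrier Ggrp" by simp
  show "continuous_map TT TT (\<lambda>x. inv\<^bsub>Ggrp\<^esub> x)" by simp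
  have comp: "continuous_map (prod_topology TT TT) (discrete_topology UNIV) (\<lambda>p. (indf \<circ> (\<lambda>(x, y). x \<otimes>\<^bsub>Ggrp\<^esub> y)) p i)" for i
  proof -
    have c1: "continuous_map (prod_topology TT TT) (prod_topology (discrete_topology UNIV) (discrete_topology UNIV))
                (\<lambda>(x,y). (i \<in> x, i \<in> y))"
      using cont_mem by (simp add: continuous_map_prod_top)
    have c2: "continuous_map (prod_topology (discrete_topology (UNIV::bool set)) (discrete_topology (UNIV::bool set))) (discrete_topology UNIV)
                (\<lambda>(a,b). a \<noteq> b)"
      unfolding prod_topology_discrete_topology[symmetric] by simp
    have "continuous_map (prod_topology TT TT) (discrete_topology UNIV) ((\<lambda>(a,b). a \<noteq> b) \<circ> (\<lambda>(x,y). (i \<in> x, i \<in> y)))"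
      by (rule continuous_map_compose[OF c1 c2])
    moreover have "((\<lambda>(a,b). a \<noteq> b) \<circ> (\<lambda>(x,y). (i \<in> x, i \<in> y))) = (\<lambda>p. (indf \<circ> (\<lambda>(x, y). x \<otimes>\<^bsub>Ggrp\<^esub> y)) p i)"
      by (auto simp: indf_def fun_eq_iff)
    ultimately show ?thesis by simp
  qed
  show "continuous_map (prod_topology TT TT) TT (\<lambda>(x, y). x \<otimes>\<^bsub>Ggrp\<^esub> y)"
    apply (rule into_TT)
    unfolding PT_def continuous_map_componentwise_UNIV using comp by blast
qed


lemma open_UN: "(\<And>x. x \<in> I \<Longrightarrow> openin TT (S x)) \<Longrightarrow> openin TT (\<Union>x\<in>I. S x)"
  by (rule openin_Union) auto

lemma closed_TT: "openin TT (- E) \<Longrightarrow> closedin TT E"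
  by (simp add: closedin_def Compl_eq_Diff_UNIV)

lemma analytic_co:
  assumes "closedin TT E" "openin TT U"
  shows "cech_analytic TT (E \<inter> U)"
  unfolding cech_analytic_def
proof (intro exI conjI)
  show "closedin (prod_topology TT baire_space) (E \<times> UNIV)"
    using assms(1) closedin_topspace[of baire_space] by (simp add: closedin_prod_Times_iff)
  have "openin (prod_topology TT baire_space) (U \<times> UNIV)"
    using assms(2) openin_topspace[of baire_space] by (simp add: openin_prod_Times_iff)
  then show "gdelta_in (prod_topology TT baire_space) (U \<times> UNIV)"
    by (rule open_imp_gdelta_in)
  have "(E \<times> UNIV) \<inter> (U \<times> UNIV) = (E \<inter> U) \<times> (UNIV :: (nat \<Rightarrow> nat) set)" by auto
  then show "E \<inter> U = fst ` ((E \<times> UNIV) \<inter> (U \<times> (UNIV :: (nat \<Rightarrow> nat) set)))" by simp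
qed

definition EA :: "real set set set" where
  "EA = {X. (\<forall>x\<in>X. x \<in> range iota \<union> range phi) \<and> (\<forall>a\<in>X. \<forall>b\<in>X. a \<in> range phi \<longrightarrow> b \<in> range phi \<longrightarrow> a = b)
            \<and> (\<forall>f n. phi f \<in> X \<longrightarrow> (iota n \<in> X \<longleftrightarrow> f n))}"

definition EB :: "real set set set" where
  "EB = {X. (\<forall>x\<in>X. x \<in> range phi) \<and> (\<forall>a\<in>X. \<forall>b\<in>X. a = b)}"

lemma closed_EA: "closedin TT EA"
proof (rule closed_TT)
  define O1 where "O1 = (\<Union>x\<in>- (range iota \<union> range phi). {X. x \<in> X})"
  define O2 where "O2 = (\<Union>a\<in>range phi. \<Union>b\<in>range phi - {a}. {X. a \<in> X} \<inter> {X. b \<in> X})"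
  define O3 where "O3 = (\<Union>f. \<Union>n. {X. phi f \<in> X} \<inter> (if f n then {X. iota n \<notin> X} else {X. iota n \<in> X}))"
  have "openin TT O1" unfolding O1_def by (intro open_UN open_mem)
  moreover have "openin TT O2" unfolding O2_def by (intro open_UN openin_Int open_mem)
  moreover have "openin TT O3" unfolding O3_def
    by (intro open_UN openin_Int open_mem) (simp add: open_mem open_nmem)
  moreover have "- EA = O1 \<union> O2 \<union> O3"
  proof (rule Set.set_eqI, rule iffI)
    fix X assume X: "X \<in> - EA"
    show "X \<in> O1 \<union> O2 \<union> O3"
    proof (rule ccontr)
      assume N: "X \<notin> O1 \<union> O2 \<union> O3"
      have 1: "\<forall>x\<in>X. x \<in> range iota \<union> range phi"
        using N unfolding O1_def by blast
      have 2: "\<forall>a\<in>X. \<forall>b\<in>X. a \<in> range phi \<longrightarrow> b \<in> range phi \<longrightarrow> a = b"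
      proof (intro ballI impI)
        fix a b assume "a \<in> X" "b \<in> X" "a \<in> range phi" "b \<in> range phi"
        then show "a = b" using N unfolding O2_def by blast
      qed
      have 3: "\<forall>f n. phi f \<in> X \<longrightarrow> (iota n \<in> X \<longleftrightarrow> f n)"
      proof (intro allI impI)
        fix f n assume "phi f \<in> X"
        then have "X \<notin> (if f n then {X. iota n \<notin> X} else {X. iota n \<in> X})"
          using N unfolding O3_def by blast
        then show "iota n \<in> X \<longleftrightarrow> f n" by (cases "f n") auto
      qed
      have "X \<in> EA" unfolding EA_def using 1 2 3 by blast
      then show False using X by blast
    qed
  next
    fix X assume X: "X \<in> O1 \<union> O2 \<union> O3"
    show "X \<in> - EA"
    proof
      assume E: "X \<in> EA"
      have E1: "\<forall>x\<in>X. x \<in> range iota \<union> range phi"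
        and E2: "\<forall>a\<in>X. \<forall>b\<in>X. a \<in> range phi \<longrightarrow> b \<in> range phi \<longrightarrow> a = b"
        and E3: "\<forall>f n. phi f \<in> X \<longrightarrow> (iota n \<in> X \<longleftrightarrow> f n)"
        using E unfolding EA_def by blast+
      from X consider "X \<in> O1" | "X \<in> O2" | "X \<in> O3" by blast
      then show False
      proof cases
        case 1 then show False using E1 unfolding O1_def by blast
      next
        case 2 then show False using E2 unfolding O2_def by blast
      next
        case 3
        then obtain f n where "phi f \<in> X" "X \<in> (if f n then {X. iota n \<notin> X} else {X. iota n \<in> X})"
          unfolding O3_def by blast
        then show False using E3 by (cases "f n") auto
      qed
    qed
  qed
  ultimately show "openin TT (- EA)" by auto
qed

lemma closed_EB: "closedin TT EB"
proof (rule closed_TT)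
  define O1 where "O1 = (\<Union>x\<in>- range phi. {X. x \<in> X})"
  define O2 where "O2 = (\<Union>a::real set. \<Union>b\<in>UNIV - {a}. {X. a \<in> X} \<inter> {X. b \<in> X})"
  have "openin TT O1" unfolding O1_def by (intro open_UN open_mem)
  moreover have "openin TT O2" unfolding O2_def by (intro open_UN openin_Int open_mem)
  moreover have "- EB = O1 \<union> O2"
  proof (rule Set.set_eqI, rule iffI)
    fix X assume X: "X \<in> - EB"
    show "X \<in> O1 \<union> O2"
    proof (rule ccontr)
      assume N: "X \<notin> O1 \<union> O2"
      have 1: "\<forall>x\<in>X. x \<in> range phi" using N unfolding O1_def by blast
      have 2: "\<forall>a\<in>X. \<forall>b\<in>X. a = b" using N unfolding O2_def by blast
      have "X \<in> EB" unfolding EB_def using 1 2 by blast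
      then show False using X by blast
    qed
  next
    fix X assume X: "X \<in> O1 \<union> O2"
    show "X \<in> - EB"
    proof
      assume E: "X \<in> EB"
      have E1: "\<forall>x\<in>X. x \<in> range phi" and E2: "\<forall>a\<in>X. \<forall>b\<in>X. a = b"
        using E unfolding EB_def by blast+
      from X consider "X \<in> O1" | "X \<in> O2" by blast
      then show False
      proof cases
        case 1 then show False using E1 unfolding O1_def by blast
      next
        case 2 then show False using E2 unfolding O2_def by blast
      qed
    qed
  qed
  ultimately show "openin TT (- EB)" by auto
qed

definition Aset :: "real set set set" where
  "Aset = {insert (phi f) (emb f) | f. f \<in> Sd}"

definition Bset :: "real set set set" where
  "Bset = {{phi f} | f. True}"

lemma Aset_eq: "Aset = EA \<inter> (\<Union>f\<in>Sd. {X. phi f \<in> X})"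
proof (rule Set.set_eqI, rule iffI)
  fix X assume "X \<in> Aset"
  then obtain f where f: "f \<in> Sd" "X = insert (phi f) (emb f)" unfolding Aset_def by blast
  have "X \<in> EA" unfolding EA_def f(2)
  proof (intro CollectI conjI ballI allI impI)
    fix x assume "x \<in> insert (phi f) (emb f)"
    then show "x \<in> range iota \<union> range phi" by (auto simp: emb_def)
  next
    fix a b assume "a \<in> insert (phi f) (emb f)" "b \<in> insert (phi f) (emb f)" "a \<in> range phi" "b \<in> range phi"
    then show "a = b" by (auto simp: emb_def)
  next
    fix g n assume "phi g \<in> insert (phi f) (emb f)"
    then have "g = f" by simp
    then show "iota n \<in> insert (phi f) (emb f) \<longleftrightarrow> g n" by simp
  qed
  then show "X \<in> EA \<inter> (\<Union>f\<in>Sd. {X. phi f \<in> X})" using f by blast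
next
  fix X assume X: "X \<in> EA \<inter> (\<Union>f\<in>Sd. {X. phi f \<in> X})"
  then obtain f where f: "f \<in> Sd" "phi f \<in> X" by blast
  have E: "X \<in> EA" using X by blast
  have "X = insert (phi f) (emb f)"
  proof (rule Set.set_eqI, rule iffI)
    fix x assume x: "x \<in> X"
    then have "x \<in> range iota \<union> range phi" using E unfolding EA_def by blast
    then show "x \<in> insert (phi f) (emb f)"
    proof
      assume "x \<in> range iota"
      then obtain n where n: "x = iota n" by blast
      then have "f n" using E f(2) x unfolding EA_def by blast
      then show ?thesis using n by simp
    next
      assume "x \<in> range phi"
      then have "x = phi f" using E f(2) x unfolding EA_def by blast
      then show ?thesis by simp
    qed
  next
    fix x assume "x \<in> insert (phi f) (emb f)"
    then consider "x = phi f" | n where "x = iota n" "f n" by (auto simp: emb_def)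
    then show "x \<in> X"
    proof cases
      case 1 then show ?thesis using f by simp
    next
      case 2 then show ?thesis using E f(2) unfolding EA_def by blast
    qed
  qed
  then show "X \<in> Aset" using f unfolding Aset_def by blast
qed

lemma Bset_eq: "Bset = EB \<inter> (\<Union>f. {X. phi f \<in> X})"
proof (rule Set.set_eqI, rule iffI)
  fix X assume "X \<in> Bset"
  then obtain f where f: "X = {phi f}" unfolding Bset_def by blast
  have "X \<in> EB" unfolding EB_def f by simp
  moreover have "X \<in> (\<Union>f. {X. phi f \<in> X})" using f by blast
  ultimately show "X \<in> EB \<inter> (\<Union>f. {X. phi f \<in> X})" by blast
next
  fix X assume X: "X \<in> EB \<inter> (\<Union>f. {X. phi f \<in> X})"
  then obtain f where f: "phi f \<in> X" by blast
  have E2: "\<forall>a\<in>X. \<forall>b\<in>X. a = b" using X unfolding EB_def by blast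
  have "X = {phi f}" using f E2 by blast
  then show "X \<in> Bset" unfolding Bset_def by blast
qed

lemma AB_emb: "emb f \<in> Aset <#>\<^bsub>Ggrp\<^esub> Bset \<longleftrightarrow> f \<in> Sd"
proof
  assume "emb f \<in> Aset <#>\<^bsub>Ggrp\<^esub> Bset"
  then have "\<exists>a\<in>Aset. \<exists>b\<in>Bset. emb f = a \<otimes>\<^bsub>Ggrp\<^esub> b"
    unfolding set_mult_def UN_iff singleton_iff .
  then obtain a b where ab: "a \<in> Aset" "b \<in> Bset" "emb f = a \<otimes>\<^bsub>Ggrp\<^esub> b"
    by blast
  obtain f1 where f1: "f1 \<in> Sd" "a = insert (phi f1) (emb f1)" using ab(1) unfolding Aset_def by blast
  obtain f2 where f2: "b = {phi f2}" using ab(2) unfolding Bset_def by blast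
  have eq: "emb f = (insert (phi f1) (emb f1) - {phi f2}) \<union> ({phi f2} - insert (phi f1) (emb f1))"
    using ab(3) f1(2) f2 by simp
  have "f1 = f2"
  proof (rule ccontr)
    assume "f1 \<noteq> f2"
    then have "phi f1 \<in> insert (phi f1) (emb f1) - {phi f2}" by simp
    then have "phi f1 \<in> emb f" using eq by blast
    then show False by simp
  qed
  then have "emb f = emb f1" using eq by auto
  then have "f = f1" by (rule emb_inj)
  then show "f \<in> Sd" using f1 by simp
next
  assume f: "f \<in> Sd"
  have "insert (phi f) (emb f) \<in> Aset" using f unfolding Aset_def by blast
  moreover have "{phi f} \<in> Bset" unfolding Bset_def by blast
  moreover have "emb f = insert (phi f) (emb f) \<otimes>\<^bsub>Ggrp\<^esub> {phi f}" by auto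
  ultimately have "\<exists>a\<in>Aset. \<exists>b\<in>Bset. emb f = a \<otimes>\<^bsub>Ggrp\<^esub> b" by blast
  then show "emb f \<in> Aset <#>\<^bsub>Ggrp\<^esub> Bset"
    unfolding set_mult_def UN_iff singleton_iff .
qed


lemma cont_emb: "continuous_map CT TT emb"
proof (rule into_TT)
  have "continuous_map CT (discrete_topology UNIV) (\<lambda>f. k \<in> emb f)" for k
  proof (cases "k \<in> range iota")
    case True
    then obtain n where n: "k = iota n" by blast
    have "continuous_map CT (discrete_topology UNIV) (\<lambda>f. f n)"
      unfolding CT_def by (rule continuous_map_product_projection) simp
    moreover have "(\<lambda>f. k \<in> emb f) = (\<lambda>f. f n)" using n by simp
    ultimately show ?thesis by simp
  next
    case False
    then have "(\<lambda>f. k \<in> emb f) = (\<lambda>f. False)" by (auto simp: emb_def)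
    then show ?thesis by simp
  qed
  then show "continuous_map CT PT (indf \<circ> emb)"
    unfolding PT_def continuous_map_componentwise_UNIV by (simp add: indf_def)
qed

lemma reduce:
  assumes "cech_analytic TT S0"
  shows "\<exists>F' H'. closedin (prod_topology CT baire_space) F' \<and> gdelta_in (prod_topology CT baire_space) H'
           \<and> {f. emb f \<in> S0} = fst ` (F' \<inter> H')"
proof -
  obtain F H where FH: "closedin (prod_topology TT baire_space) F" "gdelta_in (prod_topology TT baire_space) H"
    "S0 = fst ` (F \<inter> H)"
    using assms unfolding cech_analytic_def by blast
  define h where "h = (\<lambda>p::(nat \<Rightarrow> bool) \<times> (nat \<Rightarrow> nat). (emb (fst p), snd p))"
  have ch: "continuous_map (prod_topology CT baire_space) (prod_topology TT baire_space) h"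
  proof -
    have "continuous_map (prod_topology CT baire_space) TT (emb \<circ> fst)"
      by (rule continuous_map_compose[OF continuous_map_fst cont_emb])
    then have "continuous_map (prod_topology CT baire_space) TT (\<lambda>x. emb (fst x))"
      by (simp add: o_def)
    then show ?thesis
      unfolding h_def by (intro continuous_map_pairedI continuous_map_snd)
  qed
  have tZ: "topspace (prod_topology CT baire_space) = UNIV" by simp
  define F' where "F' = {p \<in> topspace (prod_topology CT baire_space). h p \<in> F}"
  define H' where "H' = {p \<in> topspace (prod_topology CT baire_space). h p \<in> H}"
  have cF': "closedin (prod_topology CT baire_space) F'"
    unfolding F'_def by (rule closedin_continuous_map_preimage[OF ch FH(1)])
  obtain C where C: "\<And>n::nat. openin (prod_topology TT baire_space) (C n)" "\<And>n. C (Suc n) \<subseteq> C n"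
    "\<Inter>(range C) = H"
    using FH(2) unfolding gdelta_in_descending by blast
  define C' where "C' = (\<lambda>n. {p \<in> topspace (prod_topology CT baire_space). h p \<in> C n})"
  have "gdelta_in (prod_topology CT baire_space) H'"
    unfolding gdelta_in_descending
  proof (intro exI conjI allI)
    show "openin (prod_topology CT baire_space) (C' n)" for n
      unfolding C'_def by (rule openin_continuous_map_preimage[OF ch C(1)])
    show "C' (Suc n) \<subseteq> C' n" for n
      unfolding C'_def using C(2) by blast
    show "\<Inter>(range C') = H'"
      unfolding C'_def H'_def using C(3) by blast
  qed
  moreover have "{f. emb f \<in> S0} = fst ` (F' \<inter> H')"
  proof (rule Set.set_eqI, rule iffI)
    fix f assume "f \<in> {f. emb f \<in> S0}"
    then have "emb f \<in> fst ` (F \<inter> H)" using FH(3) by simp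
    then obtain q where q: "q \<in> F \<inter> H" "emb f = fst q" by (rule imageE) simp
    have hq: "h (f, snd q) = q" using q(2) unfolding h_def by (cases q) simp
    have "(f, snd q) \<in> F' \<inter> H'"
      using q(1) hq unfolding F'_def H'_def by simp
    then show "f \<in> fst ` (F' \<inter> H')" by (rule rev_image_eqI) simp
  next
    fix f assume "f \<in> fst ` (F' \<inter> H')"
    then obtain p where p: "p \<in> F' \<inter> H'" "f = fst p" by (rule imageE) simp
    then have "h p \<in> F \<inter> H" unfolding F'_def H'_def by simp
    moreover have "fst (h p) = emb f" using p(2) unfolding h_def by simp
    ultimately have "emb f \<in> fst ` (F \<inter> H)" by (metis rev_image_eqI)
    then show "f \<in> {f. emb f \<in> S0}" using FH(3) by simp
  qed
  ultimately show ?thesis using cF' by blast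
qed

lemma Sd_eq: "{f. emb f \<in> Aset <#>\<^bsub>Ggrp\<^esub> Bset} = Sd"
  using AB_emb by blast

theorem proposition5p7:
  "\<exists>(G :: real set set monoid) (T :: real set set topology) A B.
     comm_group G \<and> topological_group G T \<and>
     compact_space T \<and> Hausdorff_space T \<and>
     cech_analytic T A \<and> cech_analytic T B \<and>
     \<not> cech_analytic T (A <#>\<^bsub>G\<^esub> B)"
proof (intro exI conjI)
  show "comm_group Ggrp" by (rule comm_Ggrp)
  show "topological_group Ggrp TT" by (rule topgroup_Ggrp)
  show "compact_space TT" by (rule compact_TT)
  show "Hausdorff_space TT" by (rule Hausdorff_TT)
  have "openin TT (\<Union>f\<in>Sd. {X. phi f \<in> X})" by (intro open_UN open_mem)
  then show "cech_analytic TT Aset"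
    unfolding Aset_eq by (rule analytic_co[OF closed_EA])
  have "openin TT (\<Union>f. {X. phi f \<in> X})" by (intro open_UN open_mem)
  then show "cech_analytic TT Bset"
    unfolding Bset_eq by (rule analytic_co[OF closed_EB])
  show "\<not> cech_analytic TT (Aset <#>\<^bsub>Ggrp\<^esub> Bset)"
  proof
    assume "cech_analytic TT (Aset <#>\<^bsub>Ggrp\<^esub> Bset)"
    then obtain F' H' where FH: "closedin (prod_topology CT baire_space) F'" "gdelta_in (prod_topology CT baire_space) H'"
      "{f. emb f \<in> Aset <#>\<^bsub>Ggrp\<^esub> Bset} = fst ` (F' \<inter> H')"
      by (blast dest: reduce)
    obtain K1 K2 where "fst ` (F' \<inter> H') = Dset K1 K2" using coding[OF FH(1,2)] by blast
    then have "Sd = Dset K1 K2" using FH(3) Sd_eq by simp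
    then show False using Sd_not_D by blast
  qed
qed

end
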